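(* Let $\mathbf{x}_i\in\chi$ be a constellation point whose Voronoi region $\mathcal{D}_{i,\mathrm{ML}}$ is unbounded. Let $\mathbf{x}_p,\mathbf{x}_q\in\chi$ be the two points of $\chi$ that are adjacent to $\mathbf{x}_i$ along the boundary of $\mathrm{conv}\,\chi$, i.e., the points of $\chi\cap\partial(\mathrm{conv}\,\chi)$ immediately preceding and following $\mathbf{x}_i$ when this boundary is traversed cyclically. Then $\mathcal{D}_{i,\mathrm{DP}}$ is a polyhedral angle with vertex $\mathbf{x}_i$: there is a closed pointed convex cone $K\neq\{\mathbf{0}\}$ in $\mathbb{R}^2$ with $\mathcal{D}_{i,\mathrm{DP}}=\mathbf{x}_i+K$, and $K$ is bounded by two rays (which coincide when $\mathbf{x}_i$ is not a vertex of $\mathrm{conv}\,\chi$), one orthogonal to $\mathbf{x}_i-\mathbf{x}_p$ and the other orthogonal to $\mathbf{x}_i-\mathbf{x}_q$.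
   Context: A constellation is a finite set $\chi=\{\mathbf{x}_1,\dots,\mathbf{x}_M\}\subset\mathbb{R}^2$ of distinct points, $M\ge 3$, not all lying on one line. The Voronoi region of $\mathbf{x}_i$ is $\mathcal{D}_{i,\mathrm{ML}}=\{\mathbf{x}\in\mathbb{R}^2:\|\mathbf{x}-\mathbf{x}_i\|\le\|\mathbf{x}-\mathbf{x}_j\|\ \forall j\}$. Two distinct points $\mathbf{x}_i,\mathbf{x}_j$ are neighbors if their Voronoi regions share an edge (a common boundary segment or ray of positive length); $\mathcal{S}_i$ denotes the set of neighbors of $\mathbf{x}_i$. With $\mathbf{a}_{i,j}=\mathbf{x}_i-\mathbf{x}_j$, $b_{i,j}=\mathbf{a}_{i,j}^T(\mathbf{x}_i+\mathbf{x}_j)/2$ and $c_{i,j}=\|\mathbf{x}_i-\mathbf{x}_j\|^2/2$, one has $\mathcal{D}_{i,\mathrm{ML}}=\{\mathbf{x}:\mathbf{a}_{i,j}^T\mathbf{x}\ge b_{i,j}\ \forall \mathbf{x}_j\in\mathcal{S}_i\}$, and the distance preserving constructive interference region (DPCIR) of $\mathbf{x}_i$ is $\mathcal{D}_{i,\mathrm{DP}}=\{\mathbf{x}\in\mathbb{R}^2:\mathbf{a}_{i,j}^T\mathbf{x}\ge b_{i,j}+c_{i,j}\ \forall \mathbf{x}_j\in\mathcal{S}_i\}=\{\mathbf{x}:(\mathbf{x}_i-\mathbf{x}_j)^T(\mathbf{x}-\mathbf{x}_i)\ge 0\ \forall\mathbf{x}_j\in\mathcal{S}_i\}$. $\mathrm{conv}\,\chi$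 is the convex hull of $\chi$. *)

theory Defs
  imports "HOL-Analysis.Analysis"
begin

type_synonym pt = "real^2"

definition constellation :: "pt set \<Rightarrow> bool" where
  "constellation C \<longleftrightarrow> finite C \<and> card C \<ge> 3 \<and> \<not> collinear C"

definition voronoi :: "pt set \<Rightarrow> pt \<Rightarrow> pt set" where
  "voronoi C xi = {x. \<forall>xj\<in>C. dist x xi \<le> dist x xj}"

text \<open>Neighbors: distinct points whose Voronoi regions share a boundary piece
  (segment or ray) of positive length, i.e. contain a common nondegenerate segment.\<close>
definition neighbors :: "pt set \<Rightarrow> pt \<Rightarrow> pt set" where
  "neighbors C xi = {xj \<in> C. xj \<noteq> xi \<and>
     (\<exists>u v. u \<noteq> v \<and> closed_segment u v \<subseteq> voronoi C xi \<inter> voronoi C xj)}"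

definition dpcir :: "pt set \<Rightarrow> pt \<Rightarrow> pt set" where
  "dpcir C xi = {x. \<forall>xj\<in>neighbors C xi. (xi - xj) \<bullet> (x - xi) \<ge> 0}"

text \<open>y is a point of C adjacent to xi along the boundary of conv C: the segment
  from xi to y lies in the boundary of the hull and contains no other point of C.\<close>
definition hull_adjacent :: "pt set \<Rightarrow> pt \<Rightarrow> pt \<Rightarrow> bool" where
  "hull_adjacent C xi y \<longleftrightarrow> y \<in> C \<and> y \<noteq> xi \<and>
     closed_segment xi y \<subseteq> frontier (convex hull C) \<and> open_segment xi y \<inter> C = {}"

end

theory Submission
  imports Defs
begin

definition cr :: "pt \<Rightarrow> pt \<Rightarrow> real" where "cr a b = a$1*b$2 - a$2*b$1"
definition perp :: "pt \<Rightarrow> pt" where "perp a = vector [-(a$2), a$1]"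

lemma inner2: "(x::pt) \<bullet> y = x$1*y$1 + x$2*y$2" by (simp add: inner_vec_def sum_2)
lemma eq2: "(x::pt) = y \<longleftrightarrow> x$1 = y$1 \<and> x$2 = y$2" by (simp add: vec_eq_iff forall_2)
lemma perp_inner: "perp a \<bullet> x = cr a x" "perp a \<bullet> a = 0"
  by (auto simp: inner2 perp_def cr_def algebra_simps)
lemma perp_nz: "a \<noteq> 0 \<Longrightarrow> perp a \<noteq> 0"
  by (auto simp: eq2 perp_def)
lemma cr_perp_aux:
  fixes n u v :: pt
  assumes "n \<bullet> u = 0" "n \<bullet> v = 0"
  shows "n$1 * cr u v = 0" "n$2 * cr u v = 0"
proof -
  have a: "n$1*u$1 = -(n$2*u$2)" "n$1* v$1 = -(n$2* v$2)" using assms by (auto simp: inner2)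
  have "n$1 * cr u v = (n$1*u$1)* v$2 - (n$1* v$1)*u$2" by (simp add: cr_def algebra_simps)
  also have "\<dots> = (-(n$2*u$2))* v$2 - (-(n$2* v$2))*u$2" by (simp only: a)
  also have "\<dots> = 0" by (simp add: algebra_simps)
  finally show "n$1 * cr u v = 0" .
  have b: "n$2*u$2 = -(n$1*u$1)" "n$2* v$2 = -(n$1* v$1)" using assms by (auto simp: inner2)
  have "n$2 * cr u v = (n$2* v$2)*u$1 - (n$2*u$2)* v$1" by (simp add: cr_def algebra_simps)
  also have "\<dots> = (-(n$1* v$1))*u$1 - (-(n$1*u$1))* v$1" by (simp only: b)
  also have "\<dots> = 0" by (simp add: algebra_simps)
  finally show "n$2 * cr u v = 0" .
qed
lemma cr_zero:
  assumes "n \<noteq> 0" "n \<bullet> u = 0" "n \<bullet> v = 0"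
  shows "cr u v = 0"
  using cr_perp_aux[OF assms(2,3)] assms(1) by (auto simp: eq2)
lemma cr0_par: assumes "cr u v = 0" "(u::pt) \<noteq> 0" shows "\<exists>s. v = s *\<^sub>R u"
proof -
  have uu: "u \<bullet> u \<noteq> 0" using assms(2) by simp
  have c: "u$1* v$2 = u$2* v$1" using assms(1) by (simp add: cr_def)
  have h: "((u \<bullet> v)/(u \<bullet> u)) * u$1 = v$1" "((u \<bullet> v)/(u \<bullet> u)) * u$2 = v$2"
  proof -
    have "(u \<bullet> v) * u$1 = v$1 * (u \<bullet> u)"
      unfolding inner2 by (simp add: algebra_simps c)
    then show "((u \<bullet> v)/(u \<bullet> u)) * u$1 = v$1" using uu by (simp add: divide_simps)
    have "(u \<bullet> v) * u$2 = v$2 * (u \<bullet> u)"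
      unfolding inner2 by (simp add: algebra_simps c)
    then show "((u \<bullet> v)/(u \<bullet> u)) * u$2 = v$2" using uu by (simp add: divide_simps)
  qed
  show ?thesis
  proof (rule exI[of _ "(u \<bullet> v)/(u \<bullet> u)"], subst eq2, intro conjI)
    show "v$1 = (((u \<bullet> v)/(u \<bullet> u)) *\<^sub>R u)$1" using h by simp
    show "v$2 = (((u \<bullet> v)/(u \<bullet> u)) *\<^sub>R u)$2" using h by simp
  qed
qed
lemma par:
  assumes "n \<noteq> 0" "n \<bullet> u = 0" "n \<bullet> v = 0" "(u::pt) \<noteq> 0"
  shows "\<exists>s. v = s *\<^sub>R u"
  using cr0_par[OF cr_zero[OF assms(1-3)] assms(4)] .
lemma indep0: assumes "cr p q \<noteq> 0" "p \<bullet> v = 0" "q \<bullet> v = 0" shows "v = (0::pt)"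
proof (rule ccontr)
  assume "v \<noteq> 0"
  then have "cr p q = 0" using cr_zero[of v p q] assms(2,3) by (simp add: inner_commute)
  then show False using assms(1) by simp
qed
lemma decomp: assumes "cr p q \<noteq> 0"
  shows "d = (cr d q / cr p q) *\<^sub>R p + (cr p d / cr p q) *\<^sub>R q"
proof -
  have "cr d q * p$1 + cr p d * q$1 = d$1 * cr p q" "cr d q * p$2 + cr p d * q$2 = d$2 * cr p q"
    by (auto simp: cr_def algebra_simps)
  then have h: "(cr d q / cr p q) * p$1 + (cr p d / cr p q) * q$1 = d$1"
     "(cr d q / cr p q) * p$2 + (cr p d / cr p q) * q$2 = d$2"
    using assms by (simp_all add: divide_simps)
  show ?thesis
  proof (subst eq2, intro conjI)
    show "d$1 = ((cr d q / cr p q) *\<^sub>R p + (cr p d / cr p q) *\<^sub>R q)$1" using h by simp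
    show "d$2 = ((cr d q / cr p q) *\<^sub>R p + (cr p d / cr p q) *\<^sub>R q)$2" using h by simp
  qed
qed

lemma support:
  assumes "constellation C" "hull_adjacent C xi xp" "xi \<in> C"
  obtains n where "n \<noteq> 0" "n \<bullet> (xp - xi) = 0" "\<forall>y\<in>C. n \<bullet> (y - xi) \<ge> 0"
proof -
  define S where "S = convex hull C"
  have fin: "finite C" and nc: "\<not> collinear C" using assms(1) by (auto simp: constellation_def)
  have xp: "xp \<in> C" and seg: "closed_segment xi xp \<subseteq> frontier S"
    using assms(2) by (auto simp: hull_adjacent_def S_def)
  have "compact S" unfolding S_def using fin by (simp add: finite_imp_compact compact_convex_hull)
  then have clS: "closure S = S" by (simp add: compact_imp_closed)
  define m where "m = midpoint xi xp"
  have mf: "m \<in> frontier S" using seg m_def midpoint_in_closed_segment by blast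
  have "aff_dim C > 1" using nc collinear_aff_dim by fastforce
  moreover have "aff_dim C \<le> 2" using aff_dim_le_DIM[of C] by simp
  ultimately have "aff_dim C = int DIM(pt)" by simp
  then have "affine hull C = UNIV" using aff_dim_eq_full by blast
  then have "affine hull S = UNIV" by (simp add: S_def affine_hull_convex_hull)
  then have ri: "rel_interior S = interior S" by (simp add: rel_interior_interior)
  have "m \<in> closure S" "m \<notin> rel_interior S" using mf ri by (auto simp: frontier_def)
  then obtain a where a0: "a \<noteq> 0" and a: "\<And>y. y \<in> closure S \<Longrightarrow> a \<bullet> m \<le> a \<bullet> y"
    using supporting_hyperplane_relative_frontier[of S m] S_def convex_convex_hull by metis
  have CS: "C \<subseteq> S" unfolding S_def by (rule hull_subset)
  have ai: "a \<bullet> m \<le> a \<bullet> xi" "a \<bullet> m \<le> a \<bullet> xp" using a CS clS assms(3) xp by auto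
  have "a \<bullet> m = (a \<bullet> xi + a \<bullet> xp) / 2" by (simp add: m_def midpoint_def inner_add_right)
  then have e: "a \<bullet> xi = a \<bullet> m" "a \<bullet> xp = a \<bullet> m" using ai by auto
  show ?thesis
  proof (rule that[of a])
    show "a \<noteq> 0" by fact
    show "a \<bullet> (xp - xi) = 0" using e by (simp add: inner_diff_right)
    show "\<forall>y\<in>C. 0 \<le> a \<bullet> (y - xi)" using a CS clS e by (auto simp: inner_diff_right)
  qed
qed

lemma dist_le_iff: "dist (z::pt) a \<le> dist z b \<longleftrightarrow> 2 * ((z - a) \<bullet> (b - a)) \<le> (b - a) \<bullet> (b - a)"
proof -
  have "dist z b = norm ((z - a) - (b - a))" by (simp add: dist_norm)
  then have "dist z a \<le> dist z b \<longleftrightarrow> (z - a) \<bullet> (z - a) \<le> ((z - a) - (b - a)) \<bullet> ((z - a) - (b - a))"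
    by (simp add: dist_norm norm_le)
  also have "\<dots> \<longleftrightarrow> 2 * ((z - a) \<bullet> (b - a)) \<le> (b - a) \<bullet> (b - a)"
    by (simp add: inner_diff_left inner_diff_right inner_commute) arith
  finally show ?thesis .
qed

lemma adj_neighbor:
  assumes fin: "finite C" and xi: "xi \<in> C" and xp: "xp \<in> C" "xp \<noteq> xi"
    and os: "open_segment xi xp \<inter> C = {}" and n0: "n \<noteq> 0" and np: "n \<bullet> (xp - xi) = 0"
    and ny: "\<forall>y\<in>C. n \<bullet> (y - xi) \<ge> 0"
  shows "xp \<in> neighbors C xi"
proof -
  define p where "p = xp - xi"
  define z where "z t = xi + (1/2) *\<^sub>R p - t *\<^sub>R n" for t
  have zxi: "z t - xi = (1/2) *\<^sub>R p - t *\<^sub>R n" for t by (simp add: z_def)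
  have np': "n \<bullet> p = 0" using np p_def by simp
  have p0: "p \<noteq> 0" using xp p_def by simp
  have ev: "\<forall>\<^sub>F t in at_top. dist (z t) xi \<le> dist (z t) y" if y: "y \<in> C" for y
  proof -
    define d where "d = y - xi"
    have key: "dist (z t) xi \<le> dist (z t) y \<longleftrightarrow> p \<bullet> d - 2 * t * (n \<bullet> d) \<le> d \<bullet> d" for t
    proof -
      have "2 * (((1/2) *\<^sub>R p - t *\<^sub>R n) \<bullet> d) = p \<bullet> d - 2 * t * (n \<bullet> d)"
        by (simp add: inner_diff_left)
      then show ?thesis unfolding dist_le_iff zxi d_def[symmetric] by simp
    qed
    have nd: "n \<bullet> d \<ge> 0" using ny y d_def by simp
    show ?thesis
    proof (cases "n \<bullet> d = 0")
      case True
      then obtain s where s: "d = s *\<^sub>R p" using par[OF n0 np' True] p0 by blast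
      have "s \<le> 0 \<or> s \<ge> 1"
      proof (rule ccontr)
        assume "\<not> (s \<le> 0 \<or> s \<ge> 1)"
        then have "0 < s" "s < 1" by auto
        moreover have "y = (1 - s) *\<^sub>R xi + s *\<^sub>R xp" using s d_def p_def
          by (simp add: algebra_simps)
        ultimately have "y \<in> open_segment xi xp" using xp by (auto simp: in_segment)
        then show False using os y by blast
      qed
      then have "0 \<le> s * (s - 1)" by (auto intro: mult_nonpos_nonpos mult_nonneg_nonneg)
      then have "s \<le> s * s" by (simp add: algebra_simps)
      then have "s * (p \<bullet> p) \<le> (s * s) * (p \<bullet> p)" by (simp add: mult_right_mono)
      then have "p \<bullet> d \<le> d \<bullet> d" using s by (simp add: algebra_simps)
      then show ?thesis using key True by simp
    next
      case False
      then have pos: "n \<bullet> d > 0" using nd by simp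
      have "\<forall>\<^sub>F t in at_top. (p \<bullet> d - d \<bullet> d) / (2 * (n \<bullet> d)) \<le> t" by (rule eventually_ge_at_top)
      then show ?thesis
      proof (rule eventually_mono)
        fix t assume "(p \<bullet> d - d \<bullet> d) / (2 * (n \<bullet> d)) \<le> t"
        then have "p \<bullet> d - d \<bullet> d \<le> t * (2 * (n \<bullet> d))" using pos by (simp add: divide_le_eq)
        then show "dist (z t) xi \<le> dist (z t) y" using key by (simp add: algebra_simps)
      qed
    qed
  qed
  have "\<forall>\<^sub>F t in at_top. \<forall>y\<in>C. dist (z t) xi \<le> dist (z t) y"
    using fin ev by (simp add: eventually_ball_finite)
  then obtain T where T: "\<And>t. t \<ge> T \<Longrightarrow> \<forall>y\<in>C. dist (z t) xi \<le> dist (z t) y"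
    by (auto simp: eventually_at_top_linorder)
  have eqd: "dist (z t) xp = dist (z t) xi" for t
  proof -
    have "z t - xp = -(1/2) *\<^sub>R p - t *\<^sub>R n" unfolding z_def p_def eq2 by (simp add: field_simps)
    moreover have "xi - xp = - p" "xp - xi = p" using p_def by auto
    moreover have "2 * ((-(1/2) *\<^sub>R p - t *\<^sub>R n) \<bullet> (- p)) = p \<bullet> p"
      using np' by (simp add: inner_diff_left inner_diff_right inner_commute[of p n])
    moreover have "2 * (((1/2) *\<^sub>R p - t *\<^sub>R n) \<bullet> p) = p \<bullet> p"
      using np' by (simp add: inner_diff_left inner_diff_right inner_commute[of p n])
    ultimately have "dist (z t) xp \<le> dist (z t) xi" "dist (z t) xi \<le> dist (z t) xp"
      unfolding dist_le_iff using zxi[of t] by auto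
    then show ?thesis by simp
  qed
  have sub: "closed_segment (z T) (z (T + 1)) \<subseteq> voronoi C xi \<inter> voronoi C xp"
  proof
    fix x assume "x \<in> closed_segment (z T) (z (T + 1))"
    then obtain \<mu> where mu: "0 \<le> \<mu>" "\<mu> \<le> 1" "x = (1 - \<mu>) *\<^sub>R z T + \<mu> *\<^sub>R z (T + 1)"
      by (auto simp: in_segment)
    have "x = z (T + \<mu>)" using mu(3) unfolding z_def eq2 by (simp add: field_simps)
    then have "\<forall>y\<in>C. dist x xi \<le> dist x y" "dist x xp = dist x xi" using T[of "T + \<mu>"] mu eqd by auto
    then show "x \<in> voronoi C xi \<inter> voronoi C xp" by (auto simp: voronoi_def dist_commute)
  qed
  have "z T \<noteq> z (T + 1)" using n0 by (simp add: z_def algebra_simps)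
  then show ?thesis using sub xp by (auto simp: neighbors_def)
qed

lemma dist_sq: "(dist (z::pt) b)^2 = (dist z a)^2 - 2 * ((z - a) \<bullet> (b - a)) + (b - a) \<bullet> (b - a)"
proof -
  have "dist z b = norm ((z - a) - (b - a))" by (simp add: dist_norm)
  then have "(dist z b)^2 = ((z - a) - (b - a)) \<bullet> ((z - a) - (b - a))"
    by (simp add: power2_norm_eq_inner)
  also have "\<dots> = (z - a) \<bullet> (z - a) - 2 * ((z - a) \<bullet> (b - a)) + (b - a) \<bullet> (b - a)"
    by (simp add: inner_diff_left inner_diff_right inner_commute)
  also have "(z - a) \<bullet> (z - a) = (dist z a)^2" by (simp add: dist_norm power2_norm_eq_inner)
  finally show ?thesis .
qed
lemma dist_eq_iff: "dist (z::pt) a = dist z b \<longleftrightarrow> 2 * ((z - a) \<bullet> (b - a)) = (b - a) \<bullet> (b - a)"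
proof -
  have "dist z a = dist z b \<longleftrightarrow> (dist z a)^2 = (dist z b)^2"
    by (metis dist_commute power2_eq_iff_nonneg zero_le_dist)
  then show ?thesis using dist_sq[of z b a] by auto
qed

lemma inner_neighbor:
  assumes fin: "finite C" and xi: "xi \<in> C" and n0: "n \<noteq> 0"
    and ny: "\<forall>y\<in>C. n \<bullet> (y - xi) \<ge> 0" and y0: "y0 \<in> C" "n \<bullet> (y0 - xi) > 0"
  shows "\<exists>xj \<in> neighbors C xi. n \<bullet> (xj - xi) > 0"
proof -
  define h where "h y = {x. dist x xi \<le> dist x y}" for y
  define V where "V = voronoi C xi"
  define P where "P S \<longleftrightarrow> S \<subseteq> C \<and> \<Inter>(h ` S) = V" for S
  have "P C" by (auto simp: P_def V_def voronoi_def h_def)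
  then obtain S where PS: "P S" and Smin: "\<And>S'. P S' \<Longrightarrow> card S \<le> card S'"
    using ex_has_least_nat[of P C card] by blast
  have SC: "S \<subseteq> C" and SV: "\<Inter>(h ` S) = V" using PS by (auto simp: P_def)
  have finS: "finite S" using SC fin finite_subset by blast
  have "\<exists>xj\<in>S. n \<bullet> (xj - xi) > 0"
  proof (rule ccontr)
    assume "\<not> ?thesis"
    then have z: "\<forall>y\<in>S. n \<bullet> (y - xi) = 0" using ny SC by force
    define \<delta> where "\<delta> = n \<bullet> (y0 - xi)"
    define t where "t = ((y0 - xi) \<bullet> (y0 - xi)) / \<delta> + 1"
    define x where "x = xi + t *\<^sub>R n"
    have "x \<in> \<Inter>(h ` S)"
    proof (rule InterI)
      fix A assume "A \<in> h ` S"
      then obtain y where y: "y \<in> S" "A = h y" by blast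
      have "2 * ((x - xi) \<bullet> (y - xi)) = 0" using z y by (simp add: x_def)
      then have "dist x xi \<le> dist x y" unfolding dist_le_iff by simp
      then show "x \<in> A" using y by (simp add: h_def)
    qed
    then have "dist x xi \<le> dist x y0" using SV y0 by (auto simp: V_def voronoi_def)
    then have le: "2 * (t * \<delta>) \<le> (y0 - xi) \<bullet> (y0 - xi)" unfolding dist_le_iff by (simp add: x_def \<delta>_def)
    have dp: "\<delta> > 0" using y0 \<delta>_def by simp
    have "t * \<delta> = (y0 - xi) \<bullet> (y0 - xi) + \<delta>" using dp by (simp add: t_def field_simps)
    then show False using le dp by (smt (verit) inner_ge_zero)
  qed
  then obtain xj where xjS: "xj \<in> S" and nxj: "n \<bullet> (xj - xi) > 0" by blast
  have xjC: "xj \<in> C" using xjS SC by blast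
  have xjne: "xj \<noteq> xi" using nxj by auto
  define S' where "S' = S - {xj}"
  have "card S' < card S" unfolding S'_def using finS xjS by (meson card_Diff1_less)
  then have "\<not> P S'" using Smin by fastforce
  moreover have "S' \<subseteq> C" using SC by (auto simp: S'_def)
  ultimately have neq: "\<Inter>(h ` S') \<noteq> V" by (simp add: P_def)
  have "V \<subseteq> \<Inter>(h ` S')" using SV by (auto simp: S'_def)
  then obtain w where wS': "w \<in> \<Inter>(h ` S')" and wV: "w \<notin> V" using neq by blast
  have wxj: "w \<notin> h xj"
  proof
    assume "w \<in> h xj"
    then have "w \<in> \<Inter>(h ` S)" using wS' xjS by (auto simp: S'_def)
    then show False using wV SV by simp
  qed
  define F where "F y z = 2 * ((z - xi) \<bullet> (y - xi)) - (y - xi) \<bullet> (y - xi)" for y z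
  have hF: "z \<in> h y \<longleftrightarrow> F y z \<le> 0" for y z by (simp add: h_def F_def dist_le_iff)
  define A where "A y = (w - xi) \<bullet> (y - xi)" for y
  define B where "B y = (y - xi) \<bullet> (y - xi)" for y
  have Bpos: "B y > 0" if "y \<noteq> xi" for y using that by (simp add: B_def)
  have Fl: "F y (xi + \<theta> *\<^sub>R (w - xi)) = 2 * \<theta> * A y - B y" for y \<theta>
    by (simp add: F_def A_def B_def)
  have "F xj w > 0" using wxj hF by force
  then have Axj: "2 * A xj > B xj" using Fl[of xj 1] by simp
  have Bxj: "B xj > 0" using Bpos xjne by simp
  define \<theta> where "\<theta> = B xj / (2 * A xj)"
  have th: "0 < \<theta>" "\<theta> < 1" using Axj Bxj by (auto simp: \<theta>_def divide_simps)
  define z0 where "z0 = xi + \<theta> *\<^sub>R (w - xi)"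
  have Fz0xj: "F xj z0 = 0" using Axj Bxj by (simp add: z0_def Fl \<theta>_def)
  define S'' where "S'' = S' - {xi}"
  have Fz0: "F y z0 < 0" if y: "y \<in> S''" for y
  proof -
    have "y \<in> S'" "y \<noteq> xi" using y by (auto simp: S''_def)
    then have "w \<in> h y" using wS' by auto
    then have "2 * A y \<le> B y" using hF Fl[of y 1] by simp
    moreover have "B y > 0" using Bpos \<open>y \<noteq> xi\<close> by simp
    ultimately have "2 * \<theta> * A y < B y" using th
      by (cases "A y \<le> 0") (auto intro: order_le_less_trans[of _ 0] mult_nonneg_nonpos
          simp: mult_nonneg_nonpos mult_less_cancel_right1 mult.assoc | smt (verit) mult_less_cancel_right2)+
    then show ?thesis by (simp add: z0_def Fl)
  qed
  define d where "d = perp (xj - xi)"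
  have d0: "d \<noteq> 0" using xjne perp_nz d_def by simp
  have dxj: "d \<bullet> (xj - xi) = 0" using perp_inner(2) d_def by simp
  have Fs: "F y (z0 + s *\<^sub>R d) = F y z0 + 2 * s * (d \<bullet> (y - xi))" for y s
  proof -
    have "z0 + s *\<^sub>R d - xi = (z0 - xi) + s *\<^sub>R d" by simp
    then show ?thesis by (simp add: F_def inner_add_left algebra_simps)
  qed
  have "\<forall>\<^sub>F s in nhds 0. F y (z0 + s *\<^sub>R d) < 0" if y: "y \<in> S''" for y
  proof -
    have "((\<lambda>s. F y z0 + 2 * s * (d \<bullet> (y - xi))) \<longlongrightarrow> F y z0 + 2 * 0 * (d \<bullet> (y - xi))) (nhds 0)"
      by (intro tendsto_intros) (simp add: filterlim_ident)
    then have "((\<lambda>s. F y (z0 + s *\<^sub>R d)) \<longlongrightarrow> F y z0) (nhds 0)" by (simp add: Fs)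
    then show ?thesis using Fz0[OF y] by (rule order_tendstoD(2))
  qed
  moreover have "finite S''" using finS by (simp add: S''_def S'_def)
  ultimately have "\<forall>\<^sub>F s in nhds 0. \<forall>y\<in>S''. F y (z0 + s *\<^sub>R d) < 0"
    by (simp add: eventually_ball_finite)
  then obtain e where e0: "e > 0" and e: "\<And>s. dist s 0 < e \<Longrightarrow> \<forall>y\<in>S''. F y (z0 + s *\<^sub>R d) < 0"
    unfolding eventually_nhds_metric by blast
  define u where "u = z0 - (e/2) *\<^sub>R d"
  define v where "v = z0 + (e/2) *\<^sub>R d"
  have uv: "u \<noteq> v" using e0 d0 by (simp add: u_def v_def eq2 algebra_simps)
  have "closed_segment u v \<subseteq> voronoi C xi \<inter> voronoi C xj"
  proof
    fix x assume "x \<in> closed_segment u v"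
    then obtain \<mu> where mu: "0 \<le> \<mu>" "\<mu> \<le> 1" "x = (1 - \<mu>) *\<^sub>R u + \<mu> *\<^sub>R v"
      by (auto simp: in_segment)
    define s where "s = (2 * \<mu> - 1) * e / 2"
    have xs: "x = z0 + s *\<^sub>R d" using mu(3) unfolding u_def v_def s_def eq2 by (simp add: field_simps)
    have a1: "\<bar>2 * \<mu> - 1\<bar> \<le> 1" using mu(1,2) by auto
    have "\<bar>s\<bar> = \<bar>2 * \<mu> - 1\<bar> * (e / 2)" using e0 by (simp add: s_def abs_mult)
    also have "\<dots> \<le> 1 * (e / 2)" using a1 e0 by (intro mult_right_mono) auto
    finally have "\<bar>s\<bar> < e" using e0 by simp
    then have FS: "\<forall>y\<in>S''. F y x < 0" using e[of s] xs by simp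
    have Fxj: "F xj x = 0" using xs Fs Fz0xj dxj by simp
    have "x \<in> \<Inter>(h ` S)"
    proof (rule InterI)
      fix A assume "A \<in> h ` S"
      then obtain y where y: "y \<in> S" "A = h y" by blast
      show "x \<in> A"
      proof (cases "y = xi")
        case True then show ?thesis using y by (simp add: h_def)
      next
        case False
        show ?thesis
        proof (cases "y = xj")
          case True then show ?thesis using y Fxj hF by simp
        next
          case False
          then have "y \<in> S''" using y \<open>y \<noteq> xi\<close> by (auto simp: S''_def S'_def)
          then show ?thesis using y FS hF by force
        qed
      qed
    qed
    then have vx: "\<forall>y\<in>C. dist x xi \<le> dist x y" using SV by (auto simp: V_def voronoi_def)
    have "dist x xi = dist x xj" using Fxj unfolding dist_eq_iff by (simp add: F_def)
    then show "x \<in> voronoi C xi \<inter> voronoi C xj" using vx by (auto simp: voronoi_def)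
  qed
  then have "xj \<in> neighbors C xi" using uv xjC xjne by (auto simp: neighbors_def)
  then show ?thesis using nxj by blast
qed

lemma nbC: "neighbors C xi \<subseteq> C" by (auto simp: neighbors_def)

lemma dp_image:
  assumes "\<And>v. v \<in> K \<longleftrightarrow> (\<forall>xj\<in>neighbors C xi. 0 \<le> (xi - xj) \<bullet> v)"
  shows "dpcir C xi = (\<lambda>v. xi + v) ` K"
proof
  show "dpcir C xi \<subseteq> (\<lambda>v. xi + v) ` K"
  proof
    fix x assume "x \<in> dpcir C xi"
    then have "x - xi \<in> K" using assms by (simp add: dpcir_def)
    then show "x \<in> (\<lambda>v. xi + v) ` K" by (rule rev_image_eqI) simp
  qed
  show "(\<lambda>v. xi + v) ` K \<subseteq> dpcir C xi" using assms by (auto simp: dpcir_def)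
qed

lemma cr_self[simp]: "cr a a = 0" by (simp add: cr_def)
lemma perp_inner2: "x \<bullet> perp a = cr a x" "a \<bullet> perp a = 0"
  by (simp_all add: inner_commute[of _ "perp a"] perp_inner)
lemma cr_anti: "cr a b = - cr b a" by (simp add: cr_def)
lemma perp_scale: "(k *\<^sub>R perp a) \<bullet> x = k * cr a x" by (simp add: perp_inner)

lemma vertex_case:
  fixes C :: "pt set"
  assumes xpN: "xp \<in> neighbors C xi" and xqN: "xq \<in> neighbors C xi"
    and xpC: "xp \<in> C" and xqC: "xq \<in> C" and ne: "xp \<noteq> xi" "xq \<noteq> xi"
    and n1: "n1 \<noteq> 0" "n1 \<bullet> (xp - xi) = 0" "\<forall>y\<in>C. n1 \<bullet> (y - xi) \<ge> 0"
    and n2: "n2 \<noteq> 0" "n2 \<bullet> (xq - xi) = 0" "\<forall>y\<in>C. n2 \<bullet> (y - xi) \<ge> 0"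
    and c0: "cr (xp - xi) (xq - xi) \<noteq> 0"
  shows "\<exists>K :: pt set. closed K \<and> convex_cone K \<and> K \<inter> uminus ` K = {0} \<and> K \<noteq> {0}
           \<and> dpcir C xi = (\<lambda>v. xi + v) ` K
           \<and> (\<exists>u w. u \<noteq> 0 \<and> w \<noteq> 0 \<and> u \<bullet> (xi - xp) = 0 \<and> w \<bullet> (xi - xq) = 0
                 \<and> frontier K = {t *\<^sub>R u | t. t \<ge> 0} \<union> {t *\<^sub>R w | t. t \<ge> 0})"
proof -
  define p where "p = xp - xi"
  define q where "q = xq - xi"
  define c where "c = cr p q"
  have c0': "c \<noteq> 0" using c0 by (simp add: c_def p_def q_def)
  have p0: "p \<noteq> 0" "q \<noteq> 0" using ne by (auto simp: p_def q_def)
  have "p \<bullet> perp p = 0" by (subst inner_commute) (rule perp_inner(2))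
  then obtain k1 where k1: "n1 = k1 *\<^sub>R perp p"
    using par[of p "perp p" n1] p0 n1 perp_nz by (auto simp: p_def inner_commute)
  have "q \<bullet> perp q = 0" by (subst inner_commute) (rule perp_inner(2))
  then obtain k2 where k2: "n2 = k2 *\<^sub>R perp q"
    using par[of q "perp q" n2] p0 n2 perp_nz by (auto simp: q_def inner_commute)
  have k10: "k1 \<noteq> 0" using n1 k1 by auto
  have k20: "k2 \<noteq> 0" using n2 k2 by auto
  have "k1 * c \<ge> 0" using n1(3) xqC k1 by (auto simp: c_def q_def perp_scale perp_inner)
  then have k1c: "k1 * c > 0" using k10 c0' by (simp add: less_le)
  have "k2 * cr q p \<ge> 0" using n2(3) xpC k2 by (auto simp: p_def perp_scale perp_inner)
  then have k2c: "- (k2 * c) > 0" using k20 c0' cr_anti[of q p] by (auto simp: c_def less_le)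
  have dec: "\<exists>\<alpha> \<beta>. \<alpha> \<ge> 0 \<and> \<beta> \<ge> 0 \<and> y - xi = \<alpha> *\<^sub>R p + \<beta> *\<^sub>R q" if y: "y \<in> C" for y
  proof -
    define d where "d = y - xi"
    have a1: "k1 * cr p d \<ge> 0" using n1(3) y k1 by (auto simp: d_def perp_scale perp_inner)
    have a2: "- (k2 * cr d q) \<ge> 0" using n2(3) y k2 cr_anti[of q d] by (auto simp: d_def perp_scale perp_inner)
    have e1: "cr p d / c = (k1 * cr p d) / (k1 * c)" using k10 by simp
    have b: "cr p d / c \<ge> 0" unfolding e1 by (rule divide_nonneg_pos[OF a1 k1c])
    have e2: "cr d q / c = (- (k2 * cr d q)) / (- (k2 * c))" using k20 by simp
    have a: "cr d q / c \<ge> 0" unfolding e2 by (rule divide_nonneg_pos[OF a2 k2c])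
    show ?thesis using decomp[OF c0'[unfolded c_def], of d] a b by (auto simp: c_def d_def)
  qed
  define K where "K = {v. p \<bullet> v \<le> 0 \<and> q \<bullet> v \<le> 0}"
  have Kiff: "v \<in> K \<longleftrightarrow> (\<forall>xj\<in>neighbors C xi. 0 \<le> (xi - xj) \<bullet> v)" for v
  proof
    assume v: "v \<in> K"
    show "\<forall>xj\<in>neighbors C xi. 0 \<le> (xi - xj) \<bullet> v"
    proof
      fix xj assume "xj \<in> neighbors C xi"
      then have "xj \<in> C" using nbC by blast
      then obtain \<alpha> \<beta> where ab: "\<alpha> \<ge> 0" "\<beta> \<ge> 0" "xj - xi = \<alpha> *\<^sub>R p + \<beta> *\<^sub>R q" using dec by blast
      have "(xi - xj) \<bullet> v = - (\<alpha> * (p \<bullet> v) + \<beta> * (q \<bullet> v))"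
        using ab(3) by (metis inner_add_left inner_minus_left inner_scaleR_left minus_diff_eq)
      moreover have "\<alpha> * (p \<bullet> v) \<le> 0" "\<beta> * (q \<bullet> v) \<le> 0" using ab v
        by (auto simp: K_def mult_nonneg_nonpos)
      ultimately show "0 \<le> (xi - xj) \<bullet> v" by simp
    qed
  next
    assume "\<forall>xj\<in>neighbors C xi. 0 \<le> (xi - xj) \<bullet> v"
    then have "0 \<le> (xi - xp) \<bullet> v" "0 \<le> (xi - xq) \<bullet> v" using xpN xqN by auto
    then show "v \<in> K" by (simp add: K_def p_def q_def inner_diff_left)
  qed
  define u where "u = (- c) *\<^sub>R perp p"
  define w where "w = c *\<^sub>R perp q"
  have u0: "u \<noteq> 0" "w \<noteq> 0" using c0' perp_nz p0 by (auto simp: u_def w_def)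
  have pu: "p \<bullet> u = 0" "q \<bullet> u = -(c^2)"
    by (simp_all add: u_def perp_inner2 c_def power2_eq_square)
  have qw: "q \<bullet> w = 0" "p \<bullet> w = -(c^2)"
    using cr_anti[of q p] by (simp_all add: w_def perp_inner2 c_def power2_eq_square)
  have c2: "c^2 > 0" using c0' by simp
  have KI: "K = {v. p \<bullet> v \<le> 0} \<inter> {v. q \<bullet> v \<le> 0}" by (auto simp: K_def)
  have clK: "closed K" unfolding KI by (intro closed_Int closed_halfspace_le)
  have ccK: "convex_cone K" unfolding convex_cone_iff
    by (auto simp: K_def inner_add_right mult_nonneg_nonpos)
  have ptK: "K \<inter> uminus ` K = {0}"
  proof -
    have "v = 0" if "v \<in> K" "v \<in> uminus ` K" for v
    proof -
      have "p \<bullet> v = 0" "q \<bullet> v = 0" using that by (auto simp: K_def)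
      then show ?thesis using indep0[of p q v] c0' by (simp add: c_def)
    qed
    moreover have "0 \<in> K" by (simp add: K_def)
    ultimately show ?thesis by force
  qed
  have "u \<in> K" using pu c2 by (simp add: K_def)
  then have Kn0: "K \<noteq> {0}" using u0 by auto
  have intK: "interior K = {v. p \<bullet> v < 0} \<inter> {v. q \<bullet> v < 0}"
    unfolding KI interior_Int using p0 by simp
  have frK: "frontier K = {v. p \<bullet> v \<le> 0 \<and> q \<bullet> v \<le> 0 \<and> (p \<bullet> v = 0 \<or> q \<bullet> v = 0)}"
    unfolding frontier_def closure_closed[OF clK] intK by (auto simp: K_def)
  have fr: "frontier K = {t *\<^sub>R u | t. t \<ge> 0} \<union> {t *\<^sub>R w | t. t \<ge> 0}"
  proof
    show "frontier K \<subseteq> {t *\<^sub>R u | t. t \<ge> 0} \<union> {t *\<^sub>R w | t. t \<ge> 0}"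
    proof
      fix v assume "v \<in> frontier K"
      then have v: "p \<bullet> v \<le> 0" "q \<bullet> v \<le> 0" "p \<bullet> v = 0 \<or> q \<bullet> v = 0" by (auto simp: frK)
      show "v \<in> {t *\<^sub>R u | t. t \<ge> 0} \<union> {t *\<^sub>R w | t. t \<ge> 0}"
      proof (cases "p \<bullet> v = 0")
        case True
        then obtain s where s: "v = s *\<^sub>R u" using par[of p u v] p0 pu u0 by blast
        then have "s * (-(c^2)) \<le> 0" using v pu by simp
        then have "s \<ge> 0" using c2 by (simp add: zero_le_mult_iff)
        then show ?thesis using s by blast
      next
        case False
        then have "q \<bullet> v = 0" using v by simp
        then obtain s where s: "v = s *\<^sub>R w" using par[of q w v] p0 qw u0 by blast
        then have "s * (-(c^2)) \<le> 0" using v qw by simp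
        then have "s \<ge> 0" using c2 by (simp add: zero_le_mult_iff)
        then show ?thesis using s by blast
      qed
    qed
    show "{t *\<^sub>R u | t. t \<ge> 0} \<union> {t *\<^sub>R w | t. t \<ge> 0} \<subseteq> frontier K"
      using pu qw c2 by (auto simp: frK mult_nonneg_nonpos)
  qed
  have "u \<bullet> (xi - xp) = 0" "w \<bullet> (xi - xq) = 0"
    using pu(1) qw(1) by (auto simp: p_def q_def inner_commute inner_diff_right)
  then show ?thesis using clK ccK ptK Kn0 dp_image[OF Kiff] fr u0 by blast
qed

lemma collinear_case:
  fixes C :: "pt set"
  assumes fin: "finite C" and xi: "xi \<in> C" and nc: "\<not> collinear C"
    and xpN: "xp \<in> neighbors C xi" and xqN: "xq \<in> neighbors C xi"
    and xpC: "xp \<in> C" and xqC: "xq \<in> C" and ne: "xp \<noteq> xi" "xq \<noteq> xi" "xp \<noteq> xq"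
    and osp: "open_segment xi xp \<inter> C = {}" and osq: "open_segment xi xq \<inter> C = {}"
    and n1: "n1 \<noteq> 0" "n1 \<bullet> (xp - xi) = 0" "\<forall>y\<in>C. n1 \<bullet> (y - xi) \<ge> 0"
    and c0: "cr (xp - xi) (xq - xi) = 0"
  shows "\<exists>K :: pt set. closed K \<and> convex_cone K \<and> K \<inter> uminus ` K = {0} \<and> K \<noteq> {0}
           \<and> dpcir C xi = (\<lambda>v. xi + v) ` K
           \<and> (\<exists>u w. u \<noteq> 0 \<and> w \<noteq> 0 \<and> u \<bullet> (xi - xp) = 0 \<and> w \<bullet> (xi - xq) = 0
                 \<and> frontier K = {t *\<^sub>R u | t. t \<ge> 0} \<union> {t *\<^sub>R w | t. t \<ge> 0})"
proof -
  define p where "p = xp - xi"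
  define q where "q = xq - xi"
  have p0: "p \<noteq> 0" using ne by (simp add: p_def)
  have np: "n1 \<bullet> p = 0" "p \<bullet> n1 = 0" using n1 by (auto simp: p_def inner_commute)
  obtain \<mu> where mu: "q = \<mu> *\<^sub>R p" using cr0_par[of p q] c0 p0 by (auto simp: p_def q_def)
  have mneg: "\<mu> < 0"
  proof (rule ccontr)
    assume "\<not> \<mu> < 0"
    then consider "\<mu> = 0" | "0 < \<mu>" "\<mu> < 1" | "\<mu> = 1" | "\<mu> > 1" by linarith
    then show False
    proof cases
      case 1 then show False using mu ne by (simp add: q_def)
    next
      case 2
      have "xq = (1 - \<mu>) *\<^sub>R xi + \<mu> *\<^sub>R xp" using mu
        by (simp add: p_def q_def algebra_simps)
      then have "xq \<in> open_segment xi xp" using 2 ne by (auto simp: in_segment)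
      then show False using osp xqC by blast
    next
      case 3 then show False using mu ne by (simp add: p_def q_def)
    next
      case 4
      have "p = (1/\<mu>) *\<^sub>R q" using mu 4 by simp
      then have h1: "xp = (1 - 1/\<mu>) *\<^sub>R xi + (1/\<mu>) *\<^sub>R xq"
        by (simp add: p_def q_def algebra_simps)
      have h2: "0 < 1/\<mu>" "1/\<mu> < 1" using 4 by auto
      have "xp \<in> open_segment xi xq" unfolding in_segment using ne(2)[symmetric] h1 h2 by blast
      then show False using osq xpC by blast
    qed
  qed
  have "\<exists>y0\<in>C. n1 \<bullet> (y0 - xi) > 0"
  proof (rule ccontr)
    assume "\<not> ?thesis"
    then have "C \<subseteq> {x. n1 \<bullet> x = n1 \<bullet> xi}" using n1(3) by (force simp: inner_diff_right)
    then have "aff_dim C \<le> aff_dim {x. n1 \<bullet> x = n1 \<bullet> xi}" by (rule aff_dim_subset)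
    also have "\<dots> = 1" using n1(1) by simp
    finally show False using nc collinear_aff_dim by blast
  qed
  then obtain y0 where "y0 \<in> C" "n1 \<bullet> (y0 - xi) > 0" by blast
  then obtain xj where xjN: "xj \<in> neighbors C xi" and nxj: "n1 \<bullet> (xj - xi) > 0"
    using inner_neighbor[OF fin xi n1(1) n1(3)] by blast
  have parn: "\<exists>s. v = s *\<^sub>R n1" if "p \<bullet> v = 0" for v
    using par[of p n1 v] p0 np n1(1) that by blast
  define K where "K = {v. p \<bullet> v = 0 \<and> n1 \<bullet> v \<le> 0}"
  have nn: "n1 \<bullet> n1 > 0" using n1(1) by simp
  have Kray: "K = {t *\<^sub>R (- n1) | t. t \<ge> 0}"
  proof
    show "K \<subseteq> {t *\<^sub>R (- n1) | t. t \<ge> 0}"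
    proof
      fix v assume "v \<in> K"
      then have v: "p \<bullet> v = 0" "n1 \<bullet> v \<le> 0" by (auto simp: K_def)
      then obtain s where s: "v = s *\<^sub>R n1" using parn by blast
      then have "s * (n1 \<bullet> n1) \<le> 0" using v by simp
      then have "s \<le> 0" using nn by (simp add: mult_le_0_iff)
      then show "v \<in> {t *\<^sub>R (- n1) | t. t \<ge> 0}" using s by (intro CollectI exI[of _ "-s"]) auto
    qed
    show "{t *\<^sub>R (- n1) | t. t \<ge> 0} \<subseteq> K"
      using np nn by (auto simp: K_def)
  qed
  have Kiff: "v \<in> K \<longleftrightarrow> (\<forall>xj\<in>neighbors C xi. 0 \<le> (xi - xj) \<bullet> v)" for v
  proof
    assume "v \<in> K"
    then obtain t where t: "t \<ge> 0" "v = t *\<^sub>R (- n1)" using Kray by blast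
    show "\<forall>xj\<in>neighbors C xi. 0 \<le> (xi - xj) \<bullet> v"
    proof
      fix y assume "y \<in> neighbors C xi"
      then have "y \<in> C" using nbC by blast
      then have "n1 \<bullet> (y - xi) \<ge> 0" using n1(3) by blast
      moreover have "(xi - y) \<bullet> v = t * (n1 \<bullet> (y - xi))"
      proof -
        have "(xi - y) \<bullet> v = (-(y - xi)) \<bullet> (-(t *\<^sub>R n1))" using t by simp
        also have "\<dots> = t * ((y - xi) \<bullet> n1)" by (simp only: inner_minus_left inner_minus_right minus_minus inner_scaleR_right)
        also have "\<dots> = t * (n1 \<bullet> (y - xi))" by (simp only: inner_commute)
        finally show ?thesis .
      qed
      ultimately show "0 \<le> (xi - y) \<bullet> v" using t by simp
    qed
  next
    assume A: "\<forall>xj\<in>neighbors C xi. 0 \<le> (xi - xj) \<bullet> v"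
    then have "0 \<le> (xi - xp) \<bullet> v" "0 \<le> (xi - xq) \<bullet> v" using xpN xqN by auto
    moreover have "xi - xp = - p" "xi - xq = - (\<mu> *\<^sub>R p)" unfolding mu[symmetric] by (simp_all add: p_def q_def)
    ultimately have a: "p \<bullet> v \<le> 0" "\<mu> * (p \<bullet> v) \<le> 0" by auto
    then have "p \<bullet> v \<ge> 0" using mneg by (simp add: mult_le_0_iff)
    then have pv: "p \<bullet> v = 0" using a by simp
    then obtain s where s: "v = s *\<^sub>R n1" using parn by blast
    have "0 \<le> (xi - xj) \<bullet> v" using A xjN by blast
    moreover have "(xi - xj) \<bullet> v = - (s * (n1 \<bullet> (xj - xi)))"
    proof -
      have "(xi - xj) \<bullet> v = (-(xj - xi)) \<bullet> (s *\<^sub>R n1)" using s by simp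
      also have "\<dots> = - (s * ((xj - xi) \<bullet> n1))" by (simp only: inner_minus_left inner_scaleR_right)
      also have "\<dots> = - (s * (n1 \<bullet> (xj - xi)))" by (simp only: inner_commute)
      finally show ?thesis .
    qed
    ultimately have "0 \<le> - (s * (n1 \<bullet> (xj - xi)))" by simp
    then have "s \<le> 0" using nxj by (simp add: mult_le_0_iff)
    then have "n1 \<bullet> v \<le> 0" using s nn by (simp add: mult_nonpos_nonneg)
    then show "v \<in> K" using pv by (simp add: K_def)
  qed
  have KI: "K = {v. p \<bullet> v = 0} \<inter> {v. n1 \<bullet> v \<le> 0}" by (auto simp: K_def)
  have clK: "closed K" unfolding KI by (intro closed_Int closed_hyperplane closed_halfspace_le)
  have ccK: "convex_cone K" unfolding convex_cone_iff
    by (auto simp: K_def inner_add_right mult_nonneg_nonpos)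
  have ptK: "K \<inter> uminus ` K = {0}"
  proof -
    have "v = 0" if "v \<in> K" "v \<in> uminus ` K" for v
    proof -
      have v: "p \<bullet> v = 0" "n1 \<bullet> v = 0" using that by (auto simp: K_def)
      then obtain s where s: "v = s *\<^sub>R n1" using parn by blast
      then have "s = 0" using v nn by simp
      then show ?thesis using s by simp
    qed
    moreover have "0 \<in> K" by (simp add: K_def)
    ultimately show ?thesis by force
  qed
  have "- n1 \<in> K" using np nn by (simp add: K_def)
  then have Kn0: "K \<noteq> {0}" using n1(1) by auto
  have "interior K \<subseteq> interior {v. p \<bullet> v = 0}" unfolding KI by (intro interior_mono) auto
  then have "interior K = {}" using p0 by simp
  then have frK: "frontier K = K" unfolding frontier_def closure_closed[OF clK] by simp
  have "xi - xp = - p" "xi - xq = - (\<mu> *\<^sub>R p)" unfolding mu[symmetric] by (simp_all add: p_def q_def)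
  then have "(- n1) \<bullet> (xi - xp) = 0" "(- n1) \<bullet> (xi - xq) = 0"
    using np by auto
  moreover have "- n1 \<noteq> 0" using n1(1) by simp
  moreover have "frontier K = {t *\<^sub>R (- n1) | t. t \<ge> 0} \<union> {t *\<^sub>R (- n1) | t. t \<ge> 0}"
    using frK Kray by simp
  ultimately have ex: "\<exists>u w. u \<noteq> 0 \<and> w \<noteq> 0 \<and> u \<bullet> (xi - xp) = 0 \<and> w \<bullet> (xi - xq) = 0
                 \<and> frontier K = {t *\<^sub>R u | t. t \<ge> 0} \<union> {t *\<^sub>R w | t. t \<ge> 0}"
    by blast
  have dK: "dpcir C xi = (\<lambda>v. xi + v) ` K" by (rule dp_image[OF Kiff])
  show ?thesis by (intro exI[of _ K] conjI; fact)
qed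

theorem lemma2:
  fixes C :: "pt set" and xi xp xq :: pt
  assumes "constellation C"
    and "xi \<in> C"
    and "\<not> bounded (voronoi C xi)"
    and "hull_adjacent C xi xp" and "hull_adjacent C xi xq" and "xp \<noteq> xq"
  shows "\<exists>K :: pt set. closed K \<and> convex_cone K \<and> K \<inter> uminus ` K = {0} \<and> K \<noteq> {0}
           \<and> dpcir C xi = (\<lambda>v. xi + v) ` K
           \<and> (\<exists>u w. u \<noteq> 0 \<and> w \<noteq> 0 \<and> u \<bullet> (xi - xp) = 0 \<and> w \<bullet> (xi - xq) = 0
                 \<and> frontier K = {t *\<^sub>R u | t. t \<ge> 0} \<union> {t *\<^sub>R w | t. t \<ge> 0})"
proof -
  have fin: "finite C" and nc: "\<not> collinear C" using assms(1) by (auto simp: constellation_def)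
  have xpC: "xp \<in> C" and xpne: "xp \<noteq> xi" and osp: "open_segment xi xp \<inter> C = {}"
    using assms(4) by (auto simp: hull_adjacent_def)
  have xqC: "xq \<in> C" and xqne: "xq \<noteq> xi" and osq: "open_segment xi xq \<inter> C = {}"
    using assms(5) by (auto simp: hull_adjacent_def)
  obtain n1 where n1: "n1 \<noteq> 0" "n1 \<bullet> (xp - xi) = 0" "\<forall>y\<in>C. n1 \<bullet> (y - xi) \<ge> 0"
    using support[OF assms(1) assms(4) assms(2)] by blast
  obtain n2 where n2: "n2 \<noteq> 0" "n2 \<bullet> (xq - xi) = 0" "\<forall>y\<in>C. n2 \<bullet> (y - xi) \<ge> 0"
    using support[OF assms(1) assms(5) assms(2)] by blast
  have xpN: "xp \<in> neighbors C xi" by (rule adj_neighbor[OF fin assms(2) xpC xpne osp n1])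
  have xqN: "xq \<in> neighbors C xi" by (rule adj_neighbor[OF fin assms(2) xqC xqne osq n2])
  show ?thesis
  proof (cases "cr (xp - xi) (xq - xi) = 0")
    case True
    show ?thesis by (rule collinear_case[OF fin assms(2) nc xpN xqN xpC xqC xpne xqne assms(6) osp osq n1 True])
  next
    case False
    show ?thesis by (rule vertex_case[OF xpN xqN xpC xqC xpne xqne n1 n2 False])
  qed
qed

end
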